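(* Let $\kappa=\mathrm{non}(\mathsf{SMZ})$ be the minimal cardinality of a set of reals that is not strongly null. Assume that there exists a strongly unbounded set $A\subseteq\mathbb{N}^{\mathbb{N}}$ with $|A|=\kappa$. Then there exist a strongly null set of reals $X\subseteq\mathbb{R}$ and a continuous function $f$ defined on $X$ whose image $Y=f[X]$ is a set of reals that is not strongly null.
   Context: A set of reals $X\subseteq\mathbb{R}$ is strongly null (has strong measure zero) if for each sequence $(\epsilon_n)_{n\in\mathbb{N}}$ of positive reals there exists a sequence of intervals $(I_n)_{n\in\mathbb{N}}$ covering $X$ with $\mathrm{diam}(I_n)<\epsilon_n$ for all $n$. $\mathsf{SMZ}$ denotes the collection of strongly null sets of reals, and $\mathrm{non}(\mathsf{SMZ})=\min\{|X| : X\subseteq\mathbb{R},\ X\notin\mathsf{SMZ}\}$. For $f,g\in\mathbb{N}^{\mathbb{N}}$, $f\le^* g$ means $f(n)\le g(n)$ for all but finitely many $n$. A set $A\subseteq\mathbb{N}^{\mathbb{N}}$ is strongly unbounded if for each $f\in\mathbb{N}^{\mathbb{N}}$, $|\{g\in A : g\le^* f\}|<|A|$. *)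

theory Defs
  imports "HOL-Analysis.Analysis"
begin

text \<open>We use closed intervals
  {a n .. b n} with b n - a n < eps n (empty if b n < a n).\<close>
definition strongly_null :: "real set \<Rightarrow> bool" where
  "strongly_null X \<longleftrightarrow>
     (\<forall>eps::nat \<Rightarrow> real. (\<forall>n. eps n > 0) \<longrightarrow>
        (\<exists>a b :: nat \<Rightarrow> real. (\<forall>n. b n - a n < eps n) \<and> X \<subseteq> (\<Union>n. {a n .. b n})))"

definition has_card_nonSMZ :: "'a set \<Rightarrow> bool" where
  "has_card_nonSMZ S \<longleftrightarrow>
     (\<exists>X::real set. \<not> strongly_null X \<and> (card_of X, card_of S) \<in> ordIso) \<and>
     (\<forall>X::real set. (card_of X, card_of S) \<in> ordLess \<longrightarrow> strongly_null X)"

definition le_star :: "(nat \<Rightarrow> nat) \<Rightarrow> (nat \<Rightarrow> nat) \<Rightarrow> bool" where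
  "le_star f g \<longleftrightarrow> (\<forall>\<^sub>F n in sequentially. f n \<le> g n)"

definition strongly_unbounded :: "(nat \<Rightarrow> nat) set \<Rightarrow> bool" where
  "strongly_unbounded A \<longleftrightarrow>
     (\<forall>f. (card_of {g \<in> A. le_star g f}, card_of A) \<in> ordLess)"

end

theory Submission imports Defs "HOL-Library.Nat_Bijection" begin

definition Emb :: "(nat \<Rightarrow> nat) \<Rightarrow> real" where
  "Emb s = (\<Sum>n. (1/3::real)^(s n))"

lemma emb_summable:
  assumes "strict_mono s" shows "summable (\<lambda>n. (1/3::real)^(s (n + k)))"
proof (rule summable_comparison_test[of _ "\<lambda>n. (1/3::real)^n"])
  show "\<exists>N. \<forall>n\<ge>N. norm ((1/3::real)^(s (n + k))) \<le> (1/3)^n"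
  proof (intro exI allI impI)
    fix n :: nat
    have "n \<le> s (n + k)" using seq_suble[OF assms, of "n+k"] by simp
    then show "norm ((1/3::real)^(s (n + k))) \<le> (1/3)^n"
      by (simp add: power_decreasing)
  qed
  show "summable (\<lambda>n. (1/3::real)^n)" by (rule summable_geometric) simp
qed

lemma smono_add: fixes i :: nat assumes "strict_mono s" shows "s n + i \<le> s (i + n)"
proof (induction i)
  case (Suc i)
  have "s (i + n) < s (Suc i + n)" using assms by (simp add: strict_mono_def)
  then show ?case using Suc by simp
qed simp

lemma tail_upper:
  assumes "strict_mono s" shows "(\<Sum>i. (1/3::real)^(s (i + n))) \<le> 3/2 * (1/3)^(s n)"
proof -
  have "(\<Sum>i. (1/3::real)^(s (i + n))) \<le> (\<Sum>i. (1/3)^(s n) * (1/3::real)^i)"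
  proof (rule suminf_le)
    fix i
    have "(1/3::real)^(s (i + n)) \<le> (1/3)^(s n + i)"
      using smono_add[OF assms, of n i] by (simp add: power_decreasing)
    then show "(1/3::real)^(s (i + n)) \<le> (1/3)^(s n) * (1/3)^i" by (simp add: power_add)
    show "summable (\<lambda>i. (1/3::real)^(s (i + n)))" by (rule emb_summable[OF assms])
    show "summable (\<lambda>i. (1/3::real)^(s n) * (1/3)^i)"
      by (intro summable_mult summable_geometric) simp
  qed
  also have "\<dots> = (1/3)^(s n) * (\<Sum>i. (1/3::real)^i)"
    by (rule suminf_mult) (rule summable_geometric, simp)
  also have "(\<Sum>i. (1/3::real)^i) = 3/2"
    by (subst suminf_geometric) auto
  finally show ?thesis by simp
qed

lemma tail_lower:
  assumes "strict_mono s" shows "(1/3::real)^(s n) \<le> (\<Sum>i. (1/3::real)^(s (i + n)))"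
proof -
  have "sum (\<lambda>i. (1/3::real)^(s (i + n))) {0} \<le> (\<Sum>i. (1/3::real)^(s (i + n)))"
    by (rule sum_le_suminf[OF emb_summable[OF assms]]) auto
  then show ?thesis by simp
qed

lemma emb_split:
  assumes "strict_mono s"
  shows "Emb s = (\<Sum>i. (1/3::real)^(s (i + n))) + (\<Sum>i<n. (1/3)^(s i))"
  unfolding Emb_def using suminf_split_initial_segment[OF emb_summable[OF assms, of 0]] by simp

lemma emb_close:
  assumes "strict_mono s"
  shows "\<bar>Emb s - (\<Sum>i<n. (1/3)^(s i))\<bar> \<le> 3/2 * (1/3)^(s n)"
proof -
  have "0 \<le> (1/3::real)^(s n)" by simp
  then show ?thesis using emb_split[OF assms, of n] tail_upper[OF assms, of n] tail_lower[OF assms, of n]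
    by auto
qed

lemma emb_sep:
  assumes s: "strict_mono s" and t: "strict_mono t" and iN: "i \<le> N" and d: "s i \<noteq> t i"
  shows "1/2 * (1/3::real)^(s N) \<le> \<bar>Emb s - Emb t\<bar>"
proof -
  define n where "n = (LEAST j. s j \<noteq> t j)"
  have sn: "s n \<noteq> t n" unfolding n_def by (rule LeastI[of _ i]) (rule d)
  have ni: "n \<le> i" unfolding n_def by (rule Least_le) (rule d)
  have eq: "\<forall>j<n. s j = t j" unfolding n_def using not_less_Least by blast
  have pre: "(\<Sum>j<n. (1/3::real)^(s j)) = (\<Sum>j<n. (1/3)^(t j))"
    using eq by (intro sum.cong) auto
  have mono: "(1/3::real)^(s N) \<le> (1/3)^(s n)"
    using ni iN s by (intro power_decreasing) (auto simp: strict_mono_less_eq)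
  have diff: "Emb s - Emb t = (\<Sum>j. (1/3::real)^(s (j + n))) - (\<Sum>j. (1/3::real)^(t (j + n)))"
    using emb_split[OF s, of n] emb_split[OF t, of n] pre by simp
  show ?thesis
  proof (cases "s n < t n")
    case True
    have "(1/3::real)^(t n) \<le> (1/3)^(Suc (s n))" using True by (intro power_decreasing) auto
    then have "(\<Sum>j. (1/3::real)^(t (j + n))) \<le> 1/2 * (1/3)^(s n)"
      using tail_upper[OF t, of n] by simp
    then have "1/2*(1/3::real)^(s n) \<le> Emb s - Emb t" using diff tail_lower[OF s, of n] by linarith
    then show ?thesis using mono by linarith
  next
    case False
    then have lt: "t n < s n" using sn by simp
    have "(1/3::real)^(s n) \<le> (1/3)^(Suc (t n))" using lt by (intro power_decreasing) auto
    then have "(\<Sum>j. (1/3::real)^(s (j + n))) \<le> 1/2 * (1/3)^(t n)"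
      using tail_upper[OF s, of n] by simp
    moreover have "(1/3::real)^(s n) \<le> (1/3)^(t n)" using lt by (intro power_decreasing) auto
    ultimately have "1/2*(1/3::real)^(s n) \<le> Emb t - Emb s" using diff tail_lower[OF t, of n] by linarith
    then show ?thesis using mono by linarith
  qed
qed

lemma emb_inj:
  assumes "strict_mono s" "strict_mono t" "Emb s = Emb t" shows "s = t"
proof (rule ccontr)
  assume "s \<noteq> t"
  then obtain i where "s i \<noteq> t i" by auto
  from emb_sep[OF assms(1,2) order_refl this] assms(3) have "(1/3::real)^(s i) \<le> 0" by simp
  moreover have "0 < (1/3::real)^(s i)" by simp
  ultimately show False by linarith
qed


definition Dec :: "(nat \<Rightarrow> nat) \<Rightarrow> real" where
  "Dec s = real_of_int (int_decode (s 0)) + (\<Sum>n. real (s (Suc n) mod 2) / 2^(Suc n))"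

lemma dec_summable: "summable (\<lambda>n. real (s (Suc n) mod 2) / 2^(Suc n))"
proof (rule summable_comparison_test[of _ "\<lambda>n. (1/2::real)^n"])
  show "\<exists>N. \<forall>n\<ge>N. norm (real (s (Suc n) mod 2) / 2^(Suc n)) \<le> (1/2)^n"
  proof (intro exI allI impI)
    fix n :: nat
    have "real (s (Suc n) mod 2) \<le> 1" by simp
    then have "real (s (Suc n) mod 2) / 2^(Suc n) \<le> 1 / 2^(Suc n)"
      by (intro divide_right_mono) auto
    also have "\<dots> \<le> (1/2)^n" by (simp add: power_divide) (rule divide_left_mono; simp)
    finally show "norm (real (s (Suc n) mod 2) / 2^(Suc n)) \<le> (1/2)^n" by simp
  qed
  show "summable (\<lambda>n. (1/2::real)^n)" by (rule summable_geometric) simp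
qed

lemma dec_close:
  assumes "\<forall>i\<le>N. s i = t i"
  shows "\<bar>Dec s - Dec t\<bar> \<le> (1/2)^N"
proof -
  define d where "d n = real (s (Suc n) mod 2) / 2^(Suc n) - real (t (Suc n) mod 2) / 2^(Suc n)" for n
  have sd: "summable d" unfolding d_def by (intro summable_diff dec_summable)
  have s0: "s 0 = t 0" using assms by simp
  have "Dec s - Dec t = (\<Sum>n. real (s (Suc n) mod 2) / 2^(Suc n)) - (\<Sum>n. real (t (Suc n) mod 2) / 2^(Suc n))"
    unfolding Dec_def using s0 by (simp del: power_Suc)
  also have "\<dots> = suminf d" unfolding d_def by (rule suminf_diff[OF dec_summable dec_summable])
  finally have "Dec s - Dec t = suminf d" .
  also have "\<dots> = (\<Sum>i. d (i + N)) + (\<Sum>i<N. d i)" by (rule suminf_split_initial_segment[OF sd])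
  also have "(\<Sum>i<N. d i) = 0" using assms unfolding d_def by (intro sum.neutral) auto
  finally have eq: "Dec s - Dec t = (\<Sum>i. d (i + N))" by simp
  have bd: "\<bar>d n\<bar> \<le> 1 / 2^(Suc n)" for n
  proof -
    have "real (s (Suc n) mod 2) \<le> 1" "real (t (Suc n) mod 2) \<le> 1" by simp_all
    then have "\<bar>real (s (Suc n) mod 2) - real (t (Suc n) mod 2)\<bar> \<le> 1" by linarith
    then show ?thesis unfolding d_def by (simp add: diff_divide_distrib[symmetric] divide_right_mono)
  qed
  have gs: "summable (\<lambda>i. (1/2::real)^(Suc N) * (1/2)^i)"
    by (intro summable_mult summable_geometric) simp
  have bd2: "norm (d (i + N)) \<le> (1/2::real)^(Suc N) * (1/2)^i" for i
  proof -
    have "(1/2::real)^(Suc N) * (1/2)^i = 1 / 2^(Suc (i + N))"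
      by (simp add: power_add power_divide)
    then show ?thesis using bd[of "i + N"] by simp
  qed
  have nsum: "summable (\<lambda>i. norm (d (i + N)))"
    by (rule summable_comparison_test[OF _ gs]) (use bd2 in auto)
  have "\<bar>\<Sum>i. d (i + N)\<bar> \<le> (\<Sum>i. norm (d (i + N)))"
    using summable_norm[OF nsum] by simp
  also have "\<dots> \<le> (\<Sum>i. (1/2::real)^(Suc N) * (1/2)^i)"
    by (rule suminf_le[OF _ nsum gs]) (use bd2 in auto)
  also have "\<dots> = (1/2)^(Suc N) * (\<Sum>i. (1/2::real)^i)"
    by (rule suminf_mult) (rule summable_geometric, simp)
  also have "(\<Sum>i. (1/2::real)^i) = 2" by (subst suminf_geometric) auto
  finally show ?thesis using eq by simp
qed

definition bitr :: "real \<Rightarrow> nat \<Rightarrow> nat" where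
  "bitr y n = nat (\<lfloor>y * 2^(Suc n)\<rfloor> - 2 * \<lfloor>y * 2^n\<rfloor>)"

lemma bitr_01: "bitr y n = 0 \<or> bitr y n = 1"
  and bitr_eq: "real (bitr y n) = real_of_int (\<lfloor>y * 2^(Suc n)\<rfloor> - 2 * \<lfloor>y * 2^n\<rfloor>)"
proof -
  define u where "u = y * 2^n"
  have e: "\<lfloor>y * 2^(Suc n)\<rfloor> = \<lfloor>2 * u\<rfloor>" unfolding u_def by (simp add: mult.commute mult.left_commute)
  moreover have "\<lfloor>2*u\<rfloor> - 2*\<lfloor>u\<rfloor> \<in> {0,1}"
  proof -
    have a: "real_of_int \<lfloor>u\<rfloor> \<le> u" "u < real_of_int \<lfloor>u\<rfloor> + 1" by linarith+
    have b: "real_of_int \<lfloor>2*u\<rfloor> \<le> 2*u" "2*u < real_of_int \<lfloor>2*u\<rfloor> + 1" by linarith+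
    have "2*\<lfloor>u\<rfloor> \<le> \<lfloor>2*u\<rfloor>" using a b by linarith
    moreover have "\<lfloor>2*u\<rfloor> < 2*\<lfloor>u\<rfloor> + 2" using a b by linarith
    ultimately show ?thesis by auto
  qed
  ultimately have c: "\<lfloor>y * 2^(Suc n)\<rfloor> - 2 * \<lfloor>y * 2^n\<rfloor> \<in> {0,1}" unfolding u_def by (simp only: e)
  then show "bitr y n = 0 \<or> bitr y n = 1" unfolding bitr_def by auto
  show "real (bitr y n) = real_of_int (\<lfloor>y * 2^(Suc n)\<rfloor> - 2 * \<lfloor>y * 2^n\<rfloor>)"
    using c unfolding bitr_def by auto
qed

lemma bitr_sums: "(\<lambda>n. real (bitr y n) / 2^(Suc n)) sums (y - real_of_int \<lfloor>y\<rfloor>)"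
proof -
  have ps: "(\<Sum>n<N. real (bitr y n) / 2^(Suc n)) = real_of_int \<lfloor>y * 2^N\<rfloor> / 2^N - real_of_int \<lfloor>y\<rfloor>" for N
  proof (induction N)
    case (Suc N)
    then show ?case by (simp add: bitr_eq field_simps)
  qed simp
  have lim: "(\<lambda>N. real_of_int \<lfloor>y * 2^N\<rfloor> / 2^N) \<longlonglongrightarrow> y"
  proof -
    have bnd: "\<bar>real_of_int \<lfloor>y * 2^N\<rfloor> / 2^N - y\<bar> \<le> (1/2)^N" for N :: nat
    proof -
      have "real_of_int \<lfloor>y * 2^N\<rfloor> \<le> y * 2^N" "y * 2^N < real_of_int \<lfloor>y * 2^N\<rfloor> + 1" by linarith+
      then have "\<bar>real_of_int \<lfloor>y * 2^N\<rfloor> - y * 2^N\<bar> \<le> 1" by linarith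
      then have "\<bar>real_of_int \<lfloor>y * 2^N\<rfloor> - y * 2^N\<bar> / 2^N \<le> 1 / 2^N" by (intro divide_right_mono) auto
      moreover have "real_of_int \<lfloor>y * 2^N\<rfloor> / 2^N - y = (real_of_int \<lfloor>y * 2^N\<rfloor> - y * 2^N) / 2^N"
        by (simp add: field_simps)
      ultimately show ?thesis by (simp add: power_divide)
    qed
    have "(\<lambda>N. (1/2::real)^N) \<longlonglongrightarrow> 0" by (rule LIMSEQ_realpow_zero) auto
    then have "(\<lambda>N. real_of_int \<lfloor>y * 2^N\<rfloor> / 2^N - y) \<longlonglongrightarrow> 0"
      by (rule Lim_null_comparison[rotated]) (use bnd in auto)
    then show ?thesis by (simp add: LIM_zero_iff)
  qed
  show ?thesis unfolding sums_def ps using tendsto_diff[OF lim tendsto_const] by simp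
qed

definition cseq :: "(nat \<Rightarrow> nat) \<Rightarrow> real \<Rightarrow> nat \<Rightarrow> nat" where
  "cseq a y n = (case n of 0 \<Rightarrow> int_encode \<lfloor>y\<rfloor>
     | Suc m \<Rightarrow> 2 * (int_encode \<lfloor>y\<rfloor> + Suc m + (\<Sum>k\<le>Suc m. a k)) + bitr y m)"

lemma cseq_mono: "strict_mono (cseq a y)"
proof (rule strict_monoI_Suc)
  fix n
  show "cseq a y n < cseq a y (Suc n)"
  proof (cases n)
    case 0 then show ?thesis by (simp add: cseq_def)
  next
    case (Suc m)
    have "bitr y m \<le> 1" "bitr y (Suc m) \<ge> 0" using bitr_01[of y m] by auto
    then show ?thesis using Suc by (simp add: cseq_def)
  qed
qed

lemma cseq_ge: "a (Suc m) \<le> cseq a y (Suc m)"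
proof -
  have "a (Suc m) \<le> (\<Sum>k\<le>Suc m. a k)" by (rule member_le_sum) auto
  then show ?thesis by (simp add: cseq_def)
qed

lemma cseq_dec: "Dec (cseq a y) = y"
proof -
  have "cseq a y (Suc n) mod 2 = bitr y n" for n
  proof -
    define K where "K = int_encode \<lfloor>y\<rfloor> + Suc n + (\<Sum>k\<le>Suc n. a k)"
    have "cseq a y (Suc n) = 2 * K + bitr y n"
      unfolding K_def cseq_def by simp
    then have "cseq a y (Suc n) mod 2 = bitr y n mod 2" by presburger
    then show ?thesis using bitr_01[of y n] by auto
  qed
  then have "(\<Sum>n. real (cseq a y (Suc n) mod 2) / 2^(Suc n)) = y - real_of_int \<lfloor>y\<rfloor>"
    using sums_unique[OF bitr_sums[of y]] by simp
  then show ?thesis unfolding Dec_def by (simp add: cseq_def)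
qed


fun Bd :: "(nat list \<Rightarrow> nat) \<Rightarrow> nat \<Rightarrow> nat" where
  "Bd h 0 = 0"
| "Bd h (Suc n) = max (Bd h n) (Max (h ` {p. set p \<subseteq> {..<Bd h n} \<and> length p = n}))"

lemma Bd_bound:
  assumes "\<forall>n. s n < h (map s [0..<n])"
  shows "\<forall>m<n. s m < Bd h n"
proof (induction n)
  case (Suc n)
  show ?case
  proof (intro allI impI)
    fix m assume "m < Suc n"
    then consider "m < n" | "m = n" by linarith
    then show "s m < Bd h (Suc n)"
    proof cases
      case 1 
      then have "s m < Bd h n" using Suc.IH by blast
      then show ?thesis by simp
    next
      case 2
      define p where "p = map s [0..<n]"
      have "set p \<subseteq> {..<Bd h n}"
      proof
        fix x assume "x \<in> set p"
        then obtain j where "j < n" "x = s j" unfolding p_def by auto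
        then show "x \<in> {..<Bd h n}" using Suc.IH by blast
      qed
      moreover have "length p = n" unfolding p_def by simp
      ultimately have pin: "p \<in> {p. set p \<subseteq> {..<Bd h n} \<and> length p = n}" by blast
      have fin: "finite (h ` {p. set p \<subseteq> {..<Bd h n} \<and> length p = n})"
        by (intro finite_imageI finite_lists_length_eq) simp
      have "h p \<le> Max (h ` {p. set p \<subseteq> {..<Bd h n} \<and> length p = n})"
        by (rule Max_ge[OF fin]) (rule imageI[OF pin])
      moreover have "s n < h p" using assms unfolding p_def by blast
      ultimately show ?thesis using 2 by (simp add: less_max_iff_disj)
    qed
  qed
qed simp

lemma koenig:
  fixes h :: "nat list \<Rightarrow> nat"
  shows "\<exists>g. \<forall>s. (\<forall>n. s n < h (map s [0..<n])) \<longrightarrow> (\<forall>n. s n < g n)"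
proof (intro exI allI impI)
  fix s n assume "\<forall>n. s n < h (map s [0..<n])"
  from Bd_bound[OF this, of "Suc n"] show "s n < Bd h (Suc n)" by simp
qed

lemma sn_mono:
  assumes S: "strongly_null S" and TS: "T \<subseteq> S" shows "strongly_null T"
  unfolding strongly_null_def
proof (intro allI impI)
  fix eps :: "nat \<Rightarrow> real" assume eps: "\<forall>n. 0 < eps n"
  have "(\<forall>n. 0 < eps n) \<longrightarrow> (\<exists>a b :: nat \<Rightarrow> real. (\<forall>n. b n - a n < eps n) \<and> S \<subseteq> (\<Union>n. {a n .. b n}))"
    using S unfolding strongly_null_def by (rule spec)
  then obtain a b :: "nat \<Rightarrow> real" where ab: "\<forall>n. b n - a n < eps n" and Sc: "S \<subseteq> (\<Union>n. {a n .. b n})"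
    using eps by auto
  have "T \<subseteq> (\<Union>n. {a n .. b n})" using TS Sc by (rule subset_trans)
  then show "\<exists>a b :: nat \<Rightarrow> real. (\<forall>n. b n - a n < eps n) \<and> T \<subseteq> (\<Union>n. {a n .. b n})"
    using ab by blast
qed


theorem theorem2p1:
  assumes "\<exists>A :: (nat \<Rightarrow> nat) set. strongly_unbounded A \<and> has_card_nonSMZ A"
  shows "\<exists>(X :: real set) (f :: real \<Rightarrow> real).
           strongly_null X \<and> continuous_on X f \<and> \<not> strongly_null (f ` X)"
proof -
  obtain A :: "(nat \<Rightarrow> nat) set" where sA: "strongly_unbounded A" and cA: "has_card_nonSMZ A"
    using assms by blast
  obtain Y :: "real set" where nY: "\<not> strongly_null Y" and YA: "(card_of Y, card_of A) \<in> ordIso"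
    using cA unfolding has_card_nonSMZ_def by blast
  have small: "\<And>Z::real set. (card_of Z, card_of A) \<in> ordLess \<Longrightarrow> strongly_null Z"
    using cA unfolding has_card_nonSMZ_def by blast
  have "\<exists>e. bij_betw e A Y" by (subst card_of_ordIso) (rule ordIso_symmetric[OF YA])
  then obtain e where be: "bij_betw e A Y" by blast
  define sq where "sq a = cseq a (e a)" for a
  have sqm: "strict_mono (sq a)" for a unfolding sq_def by (rule cseq_mono)
  define X where "X = (\<lambda>a. Emb (sq a)) ` A"
  define f where "f x = Dec (SOME s. strict_mono s \<and> Emb s = x)" for x
  have feq: "f (Emb s) = Dec s" if "strict_mono s" for s
  proof -
    have ex: "\<exists>t. strict_mono t \<and> Emb t = Emb s" using that by blast
    have "strict_mono (SOME t. strict_mono t \<and> Emb t = Emb s) \<and> Emb (SOME t. strict_mono t \<and> Emb t = Emb s) = Emb s"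
      by (rule someI_ex[OF ex])
    then have "(SOME t. strict_mono t \<and> Emb t = Emb s) = s" using emb_inj that by blast
    then show ?thesis unfolding f_def by simp
  qed
  have fsq: "f (Emb (sq a)) = e a" for a
    using feq[OF sqm] unfolding sq_def by (simp add: cseq_dec)
  have "Y \<subseteq> f ` X"
  proof
    fix y assume "y \<in> Y"
    then obtain a where "a \<in> A" "y = e a" using be unfolding bij_betw_def by auto
    then show "y \<in> f ` X" unfolding X_def using fsq by (metis image_eqI)
  qed
  then have nfX: "\<not> strongly_null (f ` X)" using nY sn_mono[of "f ` X" Y] by blast
  have cont: "continuous_on X f"
    unfolding continuous_on_iff
  proof (intro ballI allI impI)
    fix x \<epsilon> :: real assume "x \<in> X" "0 < \<epsilon>"
    then obtain a where xa: "x = Emb (sq a)" unfolding X_def by auto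
    obtain N where N: "(1/2::real)^N < \<epsilon>" using real_arch_pow_inv[OF \<open>0 < \<epsilon>\<close>, of "1/2"] by auto
    show "\<exists>d>0. \<forall>x'\<in>X. dist x' x < d \<longrightarrow> dist (f x') (f x) < \<epsilon>"
    proof (intro exI conjI ballI impI)
      show "0 < 1/2 * (1/3::real)^(sq a N)" by simp
      fix x' assume "x' \<in> X" and dx: "dist x' x < 1/2 * (1/3::real)^(sq a N)"
      then obtain a' where xa': "x' = Emb (sq a')" unfolding X_def by auto
      have agree: "\<forall>i\<le>N. sq a i = sq a' i"
      proof (rule ccontr)
        assume "\<not> (\<forall>i\<le>N. sq a i = sq a' i)"
        then obtain i where "i \<le> N" "sq a i \<noteq> sq a' i" by auto
        from emb_sep[OF sqm sqm this] dx show False unfolding xa xa' dist_real_def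
          by (simp add: abs_minus_commute)
      qed
      have "\<bar>Dec (sq a) - Dec (sq a')\<bar> \<le> (1/2)^N" by (rule dec_close[OF agree])
      then show "dist (f x') (f x) < \<epsilon>"
        unfolding xa xa' dist_real_def feq[OF sqm] using N by (simp add: abs_minus_commute)
    qed
  qed
  have snX: "strongly_null X"
    unfolding strongly_null_def
  proof (intro allI impI)
    fix eps :: "nat \<Rightarrow> real" assume eps: "\<forall>n. 0 < eps n"
    define D where "D p = (\<Sum>i<length p. (1/3::real)^(p!i))" for p :: "nat list"
    define I where "I k = {D (from_nat k) - eps (2*k) / 3 .. D (from_nat k) + eps (2*k) / 3}" for k
    define R where "R = X - (\<Union>k. I k)"
    have hex: "\<exists>M. \<forall>m\<ge>M. 3/2 * (1/3::real)^m < eps (2 * to_nat p) / 3" for p :: "nat list"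
    proof -
      have "0 < eps (2 * to_nat p) * (2/9)" using eps by simp
      then obtain M where M: "(1/3::real)^M < eps (2 * to_nat p) * (2/9)"
        using real_arch_pow_inv[of "eps (2 * to_nat p) * (2/9)" "1/3"] by auto
      show ?thesis
      proof (intro exI allI impI)
        fix m assume "M \<le> m"
        then have "(1/3::real)^m \<le> (1/3)^M" by (intro power_decreasing) auto
        then show "3/2 * (1/3::real)^m < eps (2 * to_nat p) / 3" using M by linarith
      qed
    qed
    define h where "h p = (SOME M. \<forall>m\<ge>M. 3/2 * (1/3::real)^m < eps (2 * to_nat p) / 3)" for p :: "nat list"
    have hp: "\<And>m. m \<ge> h p \<Longrightarrow> 3/2 * (1/3::real)^m < eps (2 * to_nat p) / 3" for p
      unfolding h_def using someI_ex[OF hex[of p]] by blast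
    have unc: "\<forall>n. s n < h (map s [0..<n])" if sm: "strict_mono s" and nc: "Emb s \<notin> (\<Union>k. I k)" for s
    proof (rule ccontr)
      assume "\<not> (\<forall>n. s n < h (map s [0..<n]))"
      then obtain n where "h (map s [0..<n]) \<le> s n" by (auto simp: not_less)
      define p where "p = map s [0..<n]"
      have lt: "3/2 * (1/3::real)^(s n) < eps (2 * to_nat p) / 3"
        using hp[of p "s n"] \<open>h (map s [0..<n]) \<le> s n\<close> unfolding p_def by blast
      have Dp: "D p = (\<Sum>i<n. (1/3::real)^(s i))"
        unfolding D_def p_def by (intro sum.cong) auto
      have "\<bar>Emb s - D p\<bar> < eps (2 * to_nat p) / 3"
        using emb_close[OF sm, of n] lt Dp by simp
      then have "Emb s - D p < eps (2 * to_nat p) / 3 \<and> - (Emb s - D p) < eps (2 * to_nat p) / 3"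
        by (simp only: abs_less_iff)
      then have "Emb s \<in> {D p - eps (2 * to_nat p) / 3 .. D p + eps (2 * to_nat p) / 3}" by auto
      then have "Emb s \<in> I (to_nat p)" unfolding I_def by simp
      then show False using nc by blast
    qed
    obtain g where g: "\<And>s. (\<forall>n. s n < h (map s [0..<n])) \<Longrightarrow> (\<forall>n. s n < g n)"
      using koenig[of h] by blast
    have Rsub: "R \<subseteq> (\<lambda>a. Emb (sq a)) ` {a \<in> A. le_star a g}"
    proof
      fix x assume "x \<in> R"
      then obtain a where aA: "a \<in> A" and xa: "x = Emb (sq a)" and nc: "x \<notin> (\<Union>k. I k)"
        unfolding R_def X_def by auto
      have bnd: "\<forall>n. sq a n < g n" by (rule g[OF unc[OF sqm]]) (use nc xa in simp)
      have "le_star a g" unfolding le_star_def eventually_sequentially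
      proof (intro exI allI impI)
        fix n :: nat assume "1 \<le> n"
        then obtain m where "n = Suc m" by (cases n) auto
        then show "a n \<le> g n" using cseq_ge[of a m "e a"] bnd unfolding sq_def
          by (metis less_imp_le_nat order.trans)
      qed
      then show "x \<in> (\<lambda>a. Emb (sq a)) ` {a \<in> A. le_star a g}" using aA xa by blast
    qed
    have "(card_of R, card_of ((\<lambda>a. Emb (sq a)) ` {a \<in> A. le_star a g})) \<in> ordLeq" by (rule card_of_mono1[OF Rsub])
    also have "(card_of ((\<lambda>a. Emb (sq a)) ` {a \<in> A. le_star a g}), card_of {a \<in> A. le_star a g}) \<in> ordLeq"
      by (rule card_of_image)
    finally have "(card_of R, card_of {a \<in> A. le_star a g}) \<in> ordLeq" .
    moreover have "(card_of {a \<in> A. le_star a g}, card_of A) \<in> ordLess" using sA unfolding strongly_unbounded_def by blast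
    ultimately have "(card_of R, card_of A) \<in> ordLess" by (rule ordLeq_ordLess_trans)
    then have "strongly_null R" by (rule small)
    then have SR: "\<forall>e::nat\<Rightarrow>real. (\<forall>n. 0 < e n) \<longrightarrow> (\<exists>a b :: nat \<Rightarrow> real. (\<forall>n. b n - a n < e n) \<and> R \<subseteq> (\<Union>n. {a n .. b n}))"
      unfolding strongly_null_def .
    have "\<forall>k. 0 < eps (2*k+1)" using eps by blast
    then have "\<exists>a' b' :: nat \<Rightarrow> real. (\<forall>k. b' k - a' k < eps (2*k+1)) \<and> R \<subseteq> (\<Union>k. {a' k .. b' k})"
      using spec[OF SR, of "\<lambda>k. eps (2*k+1)"] by simp
    then obtain a' b' where ab': "\<forall>k. b' k - a' k < eps (2*k+1)" and Rc: "R \<subseteq> (\<Union>k. {a' k .. b' k})"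
      by blast
    define aa where "aa n = (if even n then D (from_nat (n div 2)) - eps n / 3 else a' (n div 2))" for n
    define bb where "bb n = (if even n then D (from_nat (n div 2)) + eps n / 3 else b' (n div 2))" for n
    show "\<exists>a b :: nat \<Rightarrow> real. (\<forall>n. b n - a n < eps n) \<and> X \<subseteq> (\<Union>n. {a n .. b n})"
    proof (intro exI conjI allI)
      fix n
      show "bb n - aa n < eps n"
      proof (cases "even n")
        case True then show ?thesis unfolding aa_def bb_def using eps[rule_format, of n] by simp
      next
        case False
        then have "n = 2 * (n div 2) + 1" by presburger
        then show ?thesis unfolding aa_def bb_def using False ab' by metis
      qed
    next
      show "X \<subseteq> (\<Union>n. {aa n .. bb n})"
      proof
        fix x assume xX: "x \<in> X"
        show "x \<in> (\<Union>n. {aa n .. bb n})"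
        proof (cases "x \<in> (\<Union>k. I k)")
          case True
          then obtain k where "x \<in> I k" by blast
          then have "x \<in> {aa (2*k) .. bb (2*k)}" unfolding I_def aa_def bb_def by simp
          then show ?thesis by blast
        next
          case False
          then have "x \<in> R" unfolding R_def using xX by blast
          then obtain k where "x \<in> {a' k .. b' k}" using Rc by blast
          moreover have "aa (2*k+1) = a' k" "bb (2*k+1) = b' k" unfolding aa_def bb_def by simp_all
          ultimately show ?thesis by (metis UN_iff UNIV_I)
        qed
      qed
    qed
  qed
  show ?thesis using snX cont nfX by blast
qed

end
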